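(* Let $r$ be an odd prime and $q=2^m$ with $m\ge1$. Then $\Gamma L_1(1,q^r)=\Gamma L(1,q^r)\cap SL(r,q)$ acts transitively on $\mathbb{F}_{q^r}\setminus\{0\}$ if and only if $q=2$.
   Context: Regard $\mathbb{F}_{q^r}$ as an $r$-dimensional $\mathbb{F}_q$-vector space, so $GL(r,q)=GL_{\mathbb{F}_q}(\mathbb{F}_{q^r})$. Let $\alpha$ generate $\mathbb{F}_{q^r}^*$, let $\tau(z)=\alpha z$ and $\sigma(z)=z^q$. $\Gamma L(1,q^r)$ is the subgroup of $GL(r,q)$ generated by $\tau$ and $\sigma$, and $\Gamma L_1(1,q^r)$ is its intersection with $SL(r,q)$. *)

theory Defs
  imports "HOL-Algebra.Generated_Groups" "HOL-Algebra.Bij" "Jordan_Normal_Form.Determinant"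
begin

text \<open>The field K = F_{q^r} is a finite field type 'k; the subfield F_q is the set of
  fixed points of the q-th power map.\<close>

definition Fq :: "nat \<Rightarrow> 'k::field set" where
  "Fq q = {x. x ^ q = x}"

definition Fq_linear :: "nat \<Rightarrow> ('k::field \<Rightarrow> 'k) \<Rightarrow> bool" where
  "Fq_linear q f \<longleftrightarrow> (\<forall>x y. f (x + y) = f x + f y) \<and> (\<forall>c \<in> Fq q. \<forall>x. f (c * x) = c * f x)"

definition Fq_basis :: "nat \<Rightarrow> nat \<Rightarrow> (nat \<Rightarrow> 'k::field) \<Rightarrow> bool" where
  "Fq_basis q r b \<longleftrightarrow> (\<forall>x. \<exists>!c. (\<forall>i<r. c i \<in> Fq q) \<and> (\<forall>i\<ge>r. c i = 0) \<and> x = (\<Sum>i<r. c i * b i))"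

definition Fq_coords :: "nat \<Rightarrow> nat \<Rightarrow> (nat \<Rightarrow> 'k::field) \<Rightarrow> 'k \<Rightarrow> nat \<Rightarrow> 'k" where
  "Fq_coords q r b x = (THE c. (\<forall>i<r. c i \<in> Fq q) \<and> (\<forall>i\<ge>r. c i = 0) \<and> x = (\<Sum>i<r. c i * b i))"

definition Fq_det :: "nat \<Rightarrow> nat \<Rightarrow> ('k::field \<Rightarrow> 'k) \<Rightarrow> 'k" where
  "Fq_det q r f = (let b = (SOME b. Fq_basis q r b) in
      det (mat r r (\<lambda>(i, j). Fq_coords q r b (f (b j)) i)))"

definition GL_Fq :: "nat \<Rightarrow> ('k::field \<Rightarrow> 'k) set" where
  "GL_Fq q = {f. bij f \<and> Fq_linear q f}"

definition SL_Fq :: "nat \<Rightarrow> nat \<Rightarrow> ('k::field \<Rightarrow> 'k) set" where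
  "SL_Fq q r = {f \<in> GL_Fq q. Fq_det q r f = 1}"

definition GammaL :: "nat \<Rightarrow> 'k::field \<Rightarrow> ('k \<Rightarrow> 'k) set" where
  "GammaL q \<alpha> = generate (BijGroup (UNIV :: 'k set)) {(\<lambda>z. \<alpha> * z), (\<lambda>z. z ^ q)}"

definition GammaL1 :: "nat \<Rightarrow> nat \<Rightarrow> 'k::field \<Rightarrow> ('k \<Rightarrow> 'k) set" where
  "GammaL1 q r \<alpha> = GammaL q \<alpha> \<inter> SL_Fq q r"

definition transitive_on_nonzero :: "('k::field \<Rightarrow> 'k) set \<Rightarrow> bool" where
  "transitive_on_nonzero G \<longleftrightarrow> (\<forall>x y. x \<noteq> 0 \<longrightarrow> y \<noteq> 0 \<longrightarrow> (\<exists>g \<in> G. g x = y))"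

end

theory Submission
  imports Defs "HOL-Computational_Algebra.Polynomial"
begin

locale setting =
  fixes r m q :: nat and \<alpha> :: "'k::{field,finite}"
  assumes r_prime: "prime r" and r_odd: "odd r" and m1: "m \<ge> 1" and qdef: "q = 2^m"
  and cardk: "card (UNIV :: 'k set) = q ^ r"
  and gen: "\<forall>x::'k. x \<noteq> 0 \<longrightarrow> (\<exists>n::nat. x = \<alpha> ^ n)"
begin

definition "M = q ^ r - 1"

lemma q2: "q \<ge> 2" using m1 qdef
  by (metis one_le_numeral power_increasing power_one_right)

lemma r3: "r \<ge> 3"
proof -
  have "r \<ge> 2" using r_prime prime_ge_2_nat by blast
  moreover have "r \<noteq> 2" using r_odd by auto
  ultimately show ?thesis by linarith
qed

lemma qr_big: "q ^ r \<ge> 8"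
proof -
  have "q ^ r \<ge> 2 ^ 3" using q2 r3
  proof -
    have "(2::nat) ^ 3 \<le> 2 ^ r" using r3 by (intro power_increasing) auto
    also have "\<dots> \<le> q ^ r" using q2 by (intro power_mono) auto
    finally show ?thesis .
  qed
  then show ?thesis by simp
qed

lemma M_pos: "M \<ge> 7" unfolding M_def using qr_big by linarith

lemma card_Z: "card (UNIV - {0::'k}) = M"
  unfolding M_def using cardk by (simp add: card_Diff_singleton)

lemma alpha_nz: "\<alpha> \<noteq> 0"
proof
  assume a: "\<alpha> = 0"
  have "\<forall>x::'k. x \<in> {0,1}"
  proof
    fix x :: 'k
    show "x \<in> {0,1}"
    proof (cases "x = 0")
      case False
      then obtain n where "x = \<alpha> ^ n" using gen by blast
      then show ?thesis using a by (cases n) auto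
    qed auto
  qed
  then have "(UNIV::'k set) \<subseteq> {0,1}" by blast
  then have "card (UNIV::'k set) \<le> card {0::'k,1}" by (intro card_mono) auto
  also have "\<dots> \<le> 2" by (rule card_insert_le_m1) auto
  finally have "card (UNIV::'k set) \<le> 2" .
  then show False using qr_big cardk by linarith
qed

lemma alpha_M: "\<alpha> ^ M = 1"
proof -
  let ?Z = "UNIV - {0::'k}"
  have inj: "inj_on (\<lambda>x. \<alpha> * x) ?Z" using alpha_nz by (auto simp: inj_on_def)
  have img: "(\<lambda>x. \<alpha> * x) ` ?Z = ?Z"
  proof
    show "(\<lambda>x. \<alpha> * x) ` ?Z \<subseteq> ?Z" using alpha_nz by auto
    show "?Z \<subseteq> (\<lambda>x. \<alpha> * x) ` ?Z"
    proof
      fix y assume "y \<in> ?Z"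
      then have "y = \<alpha> * (y / \<alpha>)" "y / \<alpha> \<in> ?Z" using alpha_nz by auto
      then show "y \<in> (\<lambda>x. \<alpha> * x) ` ?Z" by blast
    qed
  qed
  have "prod (\<lambda>x. x) ?Z = prod (\<lambda>x. x) ((\<lambda>x. \<alpha> * x) ` ?Z)" using img by simp
  also have "\<dots> = prod (\<lambda>x. \<alpha> * x) ?Z" using prod.reindex[OF inj] by simp
  also have "\<dots> = \<alpha> ^ card ?Z * prod (\<lambda>x. x) ?Z" by (simp add: prod.distrib)
  finally have "1 * prod (\<lambda>x. x) ?Z = \<alpha> ^ M * prod (\<lambda>x. x) ?Z" using card_Z by simp
  moreover have "prod (\<lambda>x. x) ?Z \<noteq> 0" by simp
  ultimately show ?thesis by (metis mult_right_cancel)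
qed

lemma alpha_pow_mod: "\<alpha> ^ a = \<alpha> ^ (a mod M)"
proof -
  have "\<alpha> ^ a = \<alpha> ^ (M * (a div M) + a mod M)" by (metis div_mult_mod_eq mult.commute)
  also have "\<dots> = \<alpha> ^ (a mod M)" by (simp only: power_add power_mult alpha_M power_one mult_1)
  finally show ?thesis .
qed

lemma alpha_inj: "inj_on (\<lambda>k. \<alpha> ^ k) {..<M}"
proof -
  have "(\<lambda>k. \<alpha> ^ k) ` {..<M} = UNIV - {0}"
  proof
    show "(\<lambda>k. \<alpha> ^ k) ` {..<M} \<subseteq> UNIV - {0}" using alpha_nz by auto
    show "UNIV - {0} \<subseteq> (\<lambda>k. \<alpha> ^ k) ` {..<M}"
    proof
      fix x assume "x \<in> (UNIV - {0::'k})"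
      then obtain n where "x = \<alpha> ^ n" using gen by blast
      then have "x = \<alpha> ^ (n mod M)" using alpha_pow_mod by simp
      moreover have "n mod M < M" using M_pos by simp
      ultimately show "x \<in> (\<lambda>k. \<alpha> ^ k) ` {..<M}" by blast
    qed
  qed
  then show ?thesis using card_Z by (simp add: eq_card_imp_inj_on)
qed

lemma alpha_eq_iff: "\<alpha> ^ a = \<alpha> ^ b \<longleftrightarrow> a mod M = b mod M"
proof
  assume "\<alpha> ^ a = \<alpha> ^ b"
  then have "\<alpha> ^ (a mod M) = \<alpha> ^ (b mod M)" using alpha_pow_mod by metis
  then show "a mod M = b mod M" using alpha_inj M_pos by (auto simp: inj_on_def)
next
  assume "a mod M = b mod M" then show "\<alpha> ^ a = \<alpha> ^ b" using alpha_pow_mod by metis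
qed

lemma alpha_one_iff: "\<alpha> ^ a = 1 \<longleftrightarrow> M dvd a"
  using alpha_eq_iff[of a 0] by (simp add: mod_eq_0_iff_dvd)

lemma M_odd: "odd M"
proof -
  have "even (q ^ r)" using qdef m1 r3 by simp
  then obtain t where t: "q ^ r = 2 * t" by blast
  show ?thesis unfolding M_def t using qr_big t by presburger
qed

lemma char2: "(1::'k) + 1 = 0"
proof -
  have "(-1::'k) \<noteq> 0" by simp
  then obtain k where k: "(-1::'k) = \<alpha> ^ k" using gen by blast
  have "\<alpha> ^ (k*2) = (\<alpha> ^ k)^2" by (rule power_mult)
  also have "\<dots> = 1" by (simp flip: k)
  finally have "M dvd k * 2" using alpha_one_iff by blast
  moreover have "coprime M 2" using M_odd by simp
  ultimately have "M dvd k" using coprime_dvd_mult_left_iff by blast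
  then have "\<alpha> ^ k = 1" using alpha_one_iff by blast
  then have "(-1::'k) = 1" using k by simp
  then have "(1::'k) + 1 = 1 + (-1)" by simp
  then show ?thesis by simp
qed

lemma two0: "(2::'k) = 0" using char2 by simp

lemma add_self: "(x::'k) + x = 0"
  by (metis mult_2 two0 mult_zero_left)

lemma minus_self: "-(x::'k) = x"
  using add_self[of x] by (metis add.inverse_unique)

lemma diff_is_add: "(x::'k) - y = x + y"
  using minus_self[of y] by (metis diff_conv_add_uminus)

lemma frob2: "((x::'k) + y) ^ (2^n) = x ^ (2^n) + y ^ (2^n)"
proof (induction n)
  case 0 then show ?case by simp
next
  case (Suc n)
  have "(x + y) ^ (2 ^ Suc n) = ((x + y) ^ (2^n)) ^ 2" by (simp add: power_mult[symmetric] mult.commute)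
  also have "\<dots> = (x ^ (2^n) + y ^ (2^n)) ^ 2" using Suc by simp
  also have "\<dots> = (x ^ (2^n))^2 + (y ^ (2^n))^2 + ((x ^ (2^n)) * (y ^ (2^n)) + (x ^ (2^n)) * (y ^ (2^n)))"
    by (simp add: power2_eq_square algebra_simps)
  also have "\<dots> = (x ^ (2^n))^2 + (y ^ (2^n))^2" using add_self by (simp only: add_0_right)
  also have "\<dots> = x ^ (2 ^ Suc n) + y ^ (2 ^ Suc n)" by (simp add: power_mult[symmetric] mult.commute)
  finally show ?case .
qed

lemma frob: "((x::'k) + y) ^ (q^k) = x ^ (q^k) + y ^ (q^k)"
proof -
  have "q ^ k = 2 ^ (m * k)" using qdef by (simp add: power_mult)
  then show ?thesis using frob2 by simp
qed

lemma frob_sum: "finite A \<Longrightarrow> (\<Sum>i\<in>A. f i :: 'k) ^ (q^k) = (\<Sum>i\<in>A. f i ^ (q^k))"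
proof (induction A rule: finite_induct)
  case empty
  have "q ^ k > 0" using q2 by simp
  then show ?case by simp
next
  case (insert a A)
  then show ?case by (simp add: frob)
qed

lemma pow_qr: "(x::'k) ^ (q^r) = x"
proof (cases "x = 0")
  case True
  have "q ^ r > 0" using q2 by simp
  then show ?thesis using True by simp
next
  case False
  then obtain n where n: "x = \<alpha> ^ n" using gen by blast
  have qr: "q ^ r = M + 1" unfolding M_def using qr_big by simp
  have "(n * q ^ r) mod M = n mod M" unfolding qr by (simp add: algebra_simps)
  then have "\<alpha> ^ (n * q ^ r) = \<alpha> ^ n" using alpha_eq_iff by blast
  then show ?thesis using n by (simp add: power_mult)
qed

lemma pow_q_add_r: "(x::'k) ^ (q ^ (k + r)) = x ^ (q ^ k)"
proof -
  have "x ^ (q ^ (k + r)) = (x ^ (q ^ k)) ^ (q ^ r)" by (simp add: power_add power_mult)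
  then show ?thesis using pow_qr by simp
qed

lemma pow_q_mod: "(x::'k) ^ (q ^ k) = x ^ (q ^ (k mod r))"
proof -
  have "x ^ (q ^ (k mod r + r * t)) = x ^ (q ^ (k mod r))" for t
  proof (induction t)
    case 0 then show ?case by simp
  next
    case (Suc t)
    have "k mod r + r * Suc t = (k mod r + r * t) + r" by simp
    then show ?case using Suc pow_q_add_r by metis
  qed
  moreover have "k = k mod r + r * (k div r)" by simp
  ultimately show ?thesis by metis
qed

lemma Fq_0: "(0::'k) \<in> Fq q" using q2 by (simp add: Fq_def)
lemma Fq_1: "(1::'k) \<in> Fq q" by (simp add: Fq_def)
lemma Fq_add: "(a::'k) \<in> Fq q \<Longrightarrow> b \<in> Fq q \<Longrightarrow> a + b \<in> Fq q"
  using frob[of a b 1] by (simp add: Fq_def)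
lemma Fq_diff: "(a::'k) \<in> Fq q \<Longrightarrow> b \<in> Fq q \<Longrightarrow> a - b \<in> Fq q"
  using Fq_add diff_is_add by metis
lemma Fq_mult: "(a::'k) \<in> Fq q \<Longrightarrow> b \<in> Fq q \<Longrightarrow> a * b \<in> Fq q"
  by (simp add: Fq_def power_mult_distrib)
lemma Fq_pow: "(a::'k) \<in> Fq q \<Longrightarrow> a ^ (q ^ k) = a"
proof (induction k)
  case 0 then show ?case by simp
next
  case (Suc k)
  have "a ^ (q ^ Suc k) = (a ^ (q ^ k)) ^ q" by (simp add: power_mult[symmetric] mult.commute)
  then show ?case using Suc by (simp add: Fq_def)
qed

definition "N = (\<Sum>k<r. q ^ k)"

lemma geom: "(\<Sum>k<n. q ^ k) * (q - 1) + 1 = q ^ n"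
proof (induction n)
  case 0 then show ?case by simp
next
  case (Suc n)
  have "(\<Sum>k<Suc n. q ^ k) * (q - 1) + 1 = ((\<Sum>k<n. q ^ k) * (q - 1) + 1) + q ^ n * (q - 1)"
    by (simp add: algebra_simps)
  also have "\<dots> = q ^ n + q ^ n * (q - 1)" using Suc by simp
  also have "\<dots> = q ^ Suc n" using q2 by (simp add: algebra_simps)
  finally show ?case .
qed

lemma NM: "N * (q - 1) = M"
  using geom[of r] unfolding N_def M_def by simp

lemma card_Fq: "card (Fq q :: 'k set) \<ge> q"
proof -
  let ?S = "(\<lambda>i. \<alpha> ^ (N * i)) ` {..<q-1}"
  have injS: "inj_on (\<lambda>i. \<alpha> ^ (N * i)) {..<q-1}"
  proof (rule inj_onI)
    fix i j assume i: "i \<in> {..<q-1}" and j: "j \<in> {..<q-1}" and e: "\<alpha> ^ (N * i) = \<alpha> ^ (N * j)"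
    have Np: "N > 0" using NM M_pos by (cases N) auto
    have "N * i < M" "N * j < M" unfolding NM[symmetric] using i j Np by auto
    then have "N * i = N * j" using e alpha_eq_iff by simp
    moreover note Np
    ultimately show "i = j" by simp
  qed
  have sub: "insert 0 ?S \<subseteq> Fq q"
  proof
    fix x assume "x \<in> insert 0 ?S"
    then show "x \<in> Fq q"
    proof
      assume "x = 0" then show ?thesis using Fq_0 by simp
    next
      assume "x \<in> ?S"
      then obtain i where x: "x = \<alpha> ^ (N * i)" by blast
      have "(N * i * q) mod M = (N * i) mod M"
      proof -
        have "N * i * q = N * i + i * (N * (q - 1))" using q2 by (simp add: algebra_simps)
        then show ?thesis using NM by simp
      qed
      then have "\<alpha> ^ (N * i * q) = \<alpha> ^ (N * i)" using alpha_eq_iff by blast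
      then show ?thesis using x by (simp add: Fq_def power_mult)
    qed
  qed
  have "0 \<notin> ?S" using alpha_nz by auto
  then have "card (insert 0 ?S) = q" using card_image[OF injS] q2 by simp
  then show ?thesis using card_mono[OF _ sub] by simp
qed

definition "Cset = {c::nat\<Rightarrow>'k. (\<forall>i<r. c i \<in> Fq q) \<and> (\<forall>i\<ge>r. c i = 0)}"

lemma qk_less_M: "k < r \<Longrightarrow> q ^ k < M"
proof -
  assume k: "k < r"
  have "q ^ k \<le> q ^ (r - 1)" using k q2 by (intro power_increasing) auto
  moreover have "q ^ (r - 1) * 2 \<le> q ^ (r - 1) * q" using q2 by simp
  moreover have "q ^ (r - 1) * q = q ^ r"
  proof -
    have "q ^ (r - 1) * q = q ^ (Suc (r - 1))" by (simp only: power_Suc2)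
    also have "Suc (r - 1) = r" using r3 by simp
    finally show ?thesis .
  qed
  moreover have "q ^ (r - 1) \<ge> 2"
  proof -
    have "q ^ 1 \<le> q ^ (r - 1)" using q2 r3 by (intro power_increasing) auto
    then show ?thesis using q2 by simp
  qed
  ultimately show ?thesis unfolding M_def by linarith
qed

lemma conj_inj: "inj_on (\<lambda>k. \<alpha> ^ (q ^ k)) {..<r}"
proof (rule inj_onI)
  fix k l assume k: "k \<in> {..<r}" and l: "l \<in> {..<r}" and e: "\<alpha> ^ (q ^ k) = \<alpha> ^ (q ^ l)"
  have "q ^ k = q ^ l" using e alpha_eq_iff qk_less_M k l by simp
  then show "k = l" using q2 by (simp add: power_inject_exp)
qed

lemma lin_inj: "inj_on (\<lambda>c. \<Sum>i<r. c i * \<alpha> ^ i) Cset"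
proof (rule inj_onI)
  fix c d assume c: "c \<in> Cset" and d: "d \<in> Cset" and e: "(\<Sum>i<r. c i * \<alpha> ^ i) = (\<Sum>i<r. d i * \<alpha> ^ i)"
  define p where "p = (\<Sum>i<r. monom (c i - d i) i)"
  have coeffp: "coeff p n = (if n < r then c n - d n else 0)" for n
    unfolding p_def by (simp add: coeff_sum)
  have polyp: "poly p x = (\<Sum>i<r. (c i - d i) * x ^ i)" for x
    unfolding p_def by (simp add: poly_sum poly_monom)
  have roots: "poly p (\<alpha> ^ (q ^ k)) = 0" for k
  proof -
    have "poly p (\<alpha> ^ (q ^ k)) = (\<Sum>i<r. ((c i - d i) * \<alpha> ^ i) ^ (q ^ k))"
      unfolding polyp
    proof (rule sum.cong)
      fix i assume "i \<in> {..<r}"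
      then have "c i - d i \<in> Fq q" using c d Fq_diff unfolding Cset_def by auto
      then have "(c i - d i) ^ (q ^ k) = c i - d i" by (rule Fq_pow)
      then show "(c i - d i) * (\<alpha> ^ q ^ k) ^ i = ((c i - d i) * \<alpha> ^ i) ^ q ^ k"
        by (simp add: power_mult_distrib power_mult[symmetric] mult.commute)
    qed simp
    also have "\<dots> = (\<Sum>i<r. (c i - d i) * \<alpha> ^ i) ^ (q ^ k)" by (simp add: frob_sum)
    also have "(\<Sum>i<r. (c i - d i) * \<alpha> ^ i) = 0"
      using e by (simp add: left_diff_distrib sum_subtractf)
    finally show ?thesis using q2 by simp
  qed
  have "p = 0"
  proof (rule ccontr)
    assume p0: "p \<noteq> 0"
    have "degree p \<le> r - 1" by (rule degree_le) (auto simp: coeffp)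
    moreover have "(\<lambda>k. \<alpha> ^ (q ^ k)) ` {..<r} \<subseteq> {x. poly p x = 0}" using roots by auto
    then have "card ((\<lambda>k. \<alpha> ^ (q ^ k)) ` {..<r}) \<le> card {x. poly p x = 0}" by (intro card_mono) auto
    then have "r \<le> card {x. poly p x = 0}" using card_image[OF conj_inj] by simp
    ultimately show False using card_poly_roots_bound[OF p0] r3 by linarith
  qed
  show "c = d"
  proof
    fix n show "c n = d n"
    proof (cases "n < r")
      case True then show ?thesis using coeffp[of n] \<open>p = 0\<close> by simp
    next
      case False then show ?thesis using c d unfolding Cset_def by simp
    qed
  qed
qed

lemma card_Cset: "card Cset \<ge> q ^ r"
proof -
  have "bij_betw (\<lambda>c. restrict c {..<r}) Cset (PiE {..<r} (\<lambda>_. Fq q :: 'k set))"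
  proof (rule bij_betw_byWitness[where f' = "\<lambda>f i. if i < r then f i else 0"])
    show "\<forall>a\<in>Cset. (\<lambda>i. if i < r then restrict a {..<r} i else 0) = a"
      unfolding Cset_def by (auto simp: fun_eq_iff)
    show "\<forall>a'\<in>PiE {..<r} (\<lambda>_. Fq q). restrict (\<lambda>i. if i < r then a' i else 0) {..<r} = a'"
      by (auto simp: fun_eq_iff PiE_def extensional_def)
    show "(\<lambda>c. restrict c {..<r}) ` Cset \<subseteq> PiE {..<r} (\<lambda>_. Fq q)"
    proof (rule image_subsetI)
      fix c assume "c \<in> Cset"
      then show "restrict c {..<r} \<in> PiE {..<r} (\<lambda>_. Fq q)"
        unfolding restrict_PiE by (auto simp: Cset_def)
    qed
    show "(\<lambda>f i. if i < r then f i else 0) ` PiE {..<r} (\<lambda>_. Fq q) \<subseteq> Cset"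
      unfolding Cset_def by (auto simp: PiE_def Pi_def)
  qed
  then have "card Cset = card (PiE {..<r} (\<lambda>_. Fq q :: 'k set))" by (rule bij_betw_same_card)
  also have "\<dots> = card (Fq q :: 'k set) ^ r" by (simp add: card_PiE)
  finally show ?thesis using card_Fq by (simp add: power_mono)
qed

lemma lin_surj: "(\<lambda>c. \<Sum>i<r. c i * \<alpha> ^ i) ` Cset = UNIV"
proof -
  have "card ((\<lambda>c. \<Sum>i<r. c i * \<alpha> ^ i) ` Cset) = card Cset" using card_image[OF lin_inj] .
  then have "card ((\<lambda>c. \<Sum>i<r. c i * \<alpha> ^ i) ` Cset) \<ge> card (UNIV :: 'k set)" using card_Cset cardk by simp
  then show ?thesis by (intro card_seteq) auto
qed

lemma basis_exists: "\<exists>b. Fq_basis q r (b :: nat \<Rightarrow> 'k)"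
proof
  show "Fq_basis q r (\<lambda>i. \<alpha> ^ i)"
    unfolding Fq_basis_def
  proof
    fix x :: 'k
    have "x \<in> (\<lambda>c. \<Sum>i<r. c i * \<alpha> ^ i) ` Cset" using lin_surj by simp
    then obtain c where c: "c \<in> Cset" "x = (\<Sum>i<r. c i * \<alpha> ^ i)" by blast
    show "\<exists>!c. (\<forall>i<r. c i \<in> Fq q) \<and> (\<forall>i\<ge>r. c i = 0) \<and> x = (\<Sum>i<r. c i * \<alpha> ^ i)"
    proof (rule ex1I[of _ c])
      show "(\<forall>i<r. c i \<in> Fq q) \<and> (\<forall>i\<ge>r. c i = 0) \<and> x = (\<Sum>i<r. c i * \<alpha> ^ i)" using c unfolding Cset_def by auto
      fix d assume d: "(\<forall>i<r. d i \<in> Fq q) \<and> (\<forall>i\<ge>r. d i = 0) \<and> x = (\<Sum>i<r. d i * \<alpha> ^ i)"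
      then have "d \<in> Cset" unfolding Cset_def by blast
      moreover have "(\<Sum>i<r. d i * \<alpha> ^ i) = (\<Sum>i<r. c i * \<alpha> ^ i)" using c d by simp
      ultimately show "d = c" using inj_onD[OF lin_inj] c(1) by blast
    qed
  qed
qed

lemma coords:
  assumes b: "Fq_basis q r (b :: nat \<Rightarrow> 'k)"
  shows "(\<forall>i<r. Fq_coords q r b x i \<in> Fq q) \<and> (\<forall>i\<ge>r. Fq_coords q r b x i = 0)
         \<and> x = (\<Sum>i<r. Fq_coords q r b x i * b i)"
proof -
  have "\<exists>!c. (\<forall>i<r. c i \<in> Fq q) \<and> (\<forall>i\<ge>r. c i = 0) \<and> x = (\<Sum>i<r. c i * b i)"
    using b unfolding Fq_basis_def by blast
  then show ?thesis unfolding Fq_coords_def by (rule theI')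
qed

lemma basis_expand:
  assumes b: "Fq_basis q r (b :: nat \<Rightarrow> 'k)"
  shows "\<exists>c. (\<forall>i<r. c i \<in> Fq q) \<and> x = (\<Sum>i<r. c i * b i)"
  using coords[OF b, of x] by blast

definition "Bmat b = mat r r (\<lambda>(i,k). (b i :: 'k) ^ (q ^ k))"

lemma moore:
  assumes b: "Fq_basis q r (b :: nat \<Rightarrow> 'k)"
  shows "det (Bmat b) \<noteq> 0"
proof
  assume "det (Bmat b) = 0"
  then obtain v where v: "v \<in> carrier_vec r" "v \<noteq> 0\<^sub>v r" "Bmat b *\<^sub>v v = 0\<^sub>v r"
    using det_0_iff_vec_prod_zero_field[of "Bmat b" r] unfolding Bmat_def by auto
  define L where "L x = (\<Sum>k<r. v $ k * x ^ (q ^ k))" for x :: 'k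
  have Lb: "L (b i) = 0" if i: "i < r" for i
  proof -
    have "(Bmat b *\<^sub>v v) $ i = 0" using v(3) i by simp
    moreover have "(Bmat b *\<^sub>v v) $ i = (\<Sum>k<r. b i ^ (q ^ k) * v $ k)"
      using i v(1) unfolding Bmat_def by (simp add: scalar_prod_def atLeast0LessThan)
    ultimately show ?thesis unfolding L_def by (simp add: mult.commute)
  qed
  have L0: "L x = 0" for x
  proof -
    obtain c where c: "\<forall>i<r. c i \<in> Fq q" "x = (\<Sum>i<r. c i * b i)" using basis_expand[OF b] by blast
    have "L x = (\<Sum>k<r. v $ k * (\<Sum>i<r. c i * b i ^ (q ^ k)))"
      unfolding L_def c(2)
    proof (rule sum.cong)
      fix k assume k: "k \<in> {..<r}"
      have "(\<Sum>i<r. c i * b i) ^ (q ^ k) = (\<Sum>i<r. (c i * b i) ^ (q ^ k))" by (simp add: frob_sum)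
      also have "\<dots> = (\<Sum>i<r. c i * b i ^ (q ^ k))"
        using c(1) Fq_pow by (intro sum.cong) (auto simp: power_mult_distrib)
      finally show "v $ k * (\<Sum>i<r. c i * b i) ^ q ^ k = v $ k * (\<Sum>i<r. c i * b i ^ q ^ k)" by simp
    qed simp
    also have "\<dots> = (\<Sum>k<r. \<Sum>i<r. c i * (v $ k * b i ^ q ^ k))"
      by (simp add: sum_distrib_left mult.left_commute)
    also have "\<dots> = (\<Sum>i<r. \<Sum>k<r. c i * (v $ k * b i ^ q ^ k))" by (rule sum.swap)
    also have "\<dots> = (\<Sum>i<r. c i * L (b i))"
      unfolding L_def by (simp add: sum_distrib_left)
    also have "\<dots> = 0" using Lb by simp
    finally show ?thesis .
  qed
  obtain k0 where k0: "k0 < r" "v $ k0 \<noteq> 0" using v(1,2) by (auto simp: vec_eq_iff)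
  define P where "P = (\<Sum>k<r. monom (v $ k) (q ^ k))"
  have coeffP: "coeff P n = (\<Sum>k<r. if q ^ k = n then v $ k else 0)" for n
    unfolding P_def by (simp add: coeff_sum coeff_monom)
  have polyP: "poly P x = L x" for x
    unfolding P_def L_def by (simp add: poly_sum poly_monom)
  have "coeff P (q ^ k0) = v $ k0"
  proof -
    have "coeff P (q ^ k0) = (\<Sum>k<r. if k = k0 then v $ k else 0)"
      unfolding coeffP using q2 by (intro sum.cong) (auto simp: power_inject_exp)
    also have "\<dots> = v $ k0" using k0 by simp
    finally show ?thesis .
  qed
  then have P0: "P \<noteq> 0" using k0 by auto
  have "degree P \<le> q ^ (r - 1)"
  proof (rule degree_le, intro allI impI)
    fix n assume n: "q ^ (r - 1) < n"
    have "q ^ k \<noteq> n" if "k < r" for k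
    proof -
      have "q ^ k \<le> q ^ (r - 1)" using that q2 by (intro power_increasing) auto
      then show ?thesis using n by simp
    qed
    then show "coeff P n = 0" unfolding coeffP by simp
  qed
  moreover have "{x. poly P x = 0} = UNIV" using polyP L0 by auto
  then have "card {x. poly P x = 0} = q ^ r" using cardk by simp
  moreover have "q ^ (r - 1) < q ^ r" using q2 r3 by (intro power_strict_increasing) auto
  ultimately show False using card_poly_roots_bound[OF P0] by linarith
qed

lemma det_sq_one: "(x::'k) * x = 1 \<Longrightarrow> x = 1"
proof -
  assume x: "x * x = 1"
  have "(x + 1) * (x + 1) = x * x + (x + x) + 1" by (simp only: distrib_left distrib_right add.assoc mult_1_left mult_1_right)
  also have "\<dots> = 1 + 0 + 1" unfolding x add_self[of x] ..
  also have "\<dots> = 0" using add_self[of 1] by (simp only: add_0_right)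
  finally have "(x + 1) * (x + 1) = 0" .
  then have "x + 1 = 0" by (simp only: mult_eq_0_iff) simp
  then have "x = - 1" by (simp add: eq_neg_iff_add_eq_0)
  then show "x = 1" using minus_self[of 1] by simp
qed

definition "Pmat j = mat r r (\<lambda>(m,k). if m = (k + j) mod r then (1::'k) else 0)"

lemma det_P: "det (Pmat j) = 1"
proof -
  have PC: "Pmat j \<in> carrier_mat r r" unfolding Pmat_def by simp
  have "transpose_mat (Pmat j) * Pmat j = 1\<^sub>m r"
  proof (rule eq_matI)
    fix k k' assume k: "k < dim_row (1\<^sub>m r :: 'k mat)" and k': "k' < dim_col (1\<^sub>m r :: 'k mat)"
    then have kr: "k < r" "k' < r" by auto
    have "(transpose_mat (Pmat j) * Pmat j) $$ (k, k') =
        (\<Sum>m\<in>{0..<r}. (if m = (k + j) mod r then 1 else 0) * (if m = (k' + j) mod r then 1 else 0))"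
      using kr unfolding Pmat_def by (simp add: scalar_prod_def)
    also have "\<dots> = (\<Sum>m\<in>{0..<r}. if m = (k + j) mod r then (if (k + j) mod r = (k' + j) mod r then 1 else 0) else 0)"
      by (intro sum.cong) auto
    also have "\<dots> = (if (k + j) mod r = (k' + j) mod r then 1 else 0)"
      using r3 by (simp add: sum.delta')
    also have "((k + j) mod r = (k' + j) mod r) = (k = k')"
    proof
      assume e0: "(k + j) mod r = (k' + j) mod r"
      have sh: "x + j + (r - j mod r) = x + (j div r + 1) * r" for x
      proof -
        have "j div r * r + j mod r = j" by (rule div_mult_mod_eq)
        moreover have "j mod r < r" using r3 by simp
        moreover have "(j div r + 1) * r = j div r * r + r" by simp
        ultimately show ?thesis by linarith
      qed
      have "((k + j) mod r + (r - j mod r)) mod r = ((k' + j) mod r + (r - j mod r)) mod r" using e0 by simp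
      then have "(k + j + (r - j mod r)) mod r = (k' + j + (r - j mod r)) mod r" by (simp only: mod_add_left_eq)
      then have "k mod r = k' mod r" by (simp only: sh mod_mult_self1)
      then show "k = k'" using kr by simp
    qed simp
    finally show "(transpose_mat (Pmat j) * Pmat j) $$ (k, k') = 1\<^sub>m r $$ (k, k')" using kr by simp
  qed (auto simp: Pmat_def)
  then have "det (transpose_mat (Pmat j) * Pmat j) = 1" by simp
  then have "det (Pmat j) * det (Pmat j) = 1"
    using det_mult[of "transpose_mat (Pmat j)" r "Pmat j"] det_transpose[OF PC] PC by simp
  then show ?thesis by (rule det_sq_one)
qed

definition "Dmat \<beta> = mat r r (\<lambda>(m,k). if m = k then (\<beta>::'k) ^ (q ^ k) else 0)"

lemma det_D: "det (Dmat \<beta>) = \<beta> ^ N"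
proof -
  have "upper_triangular (Dmat \<beta>)" unfolding Dmat_def upper_triangular_def by auto
  then have "det (Dmat \<beta>) = prod_list (diag_mat (Dmat \<beta>))"
    by (rule det_upper_triangular[of _ r]) (simp add: Dmat_def)
  also have "\<dots> = (\<Prod>k = 0..<r. \<beta> ^ (q ^ k))" unfolding prod_list_diag_prod Dmat_def
    by (intro prod.cong) auto
  also have "\<dots> = \<beta> ^ N" unfolding N_def by (simp add: power_sum atLeast0LessThan)
  finally show ?thesis .
qed

definition "Qmat j \<beta> = mat r r (\<lambda>(m,k). if m = (k + j) mod r then (\<beta>::'k) ^ (q ^ k) else 0)"

lemma PD: "Pmat j * Dmat \<beta> = Qmat j \<beta>"
proof (rule eq_matI)
  fix m k assume m: "m < dim_row (Qmat j \<beta>)" and k: "k < dim_col (Qmat j \<beta>)"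
  then have mk: "m < r" "k < r" by (auto simp: Qmat_def)
  have "(Pmat j * Dmat \<beta>) $$ (m, k) = (\<Sum>t\<in>{0..<r}. (if m = (t + j) mod r then 1 else 0) * (if t = k then \<beta> ^ (q ^ k) else 0))"
    using mk unfolding Pmat_def Dmat_def by (simp add: scalar_prod_def)
  also have "\<dots> = (\<Sum>t\<in>{0..<r}. if t = k then (if m = (k + j) mod r then \<beta> ^ (q ^ k) else 0) else 0)"
    by (intro sum.cong) auto
  also have "\<dots> = (if m = (k + j) mod r then \<beta> ^ (q ^ k) else 0)" using mk by (simp add: sum.delta')
  finally show "(Pmat j * Dmat \<beta>) $$ (m, k) = Qmat j \<beta> $$ (m, k)" using mk by (simp add: Qmat_def)
qed (auto simp: Pmat_def Dmat_def Qmat_def)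

lemma det_Q: "det (Qmat j \<beta>) = \<beta> ^ N"
proof -
  have "det (Qmat j \<beta>) = det (Pmat j) * det (Dmat \<beta>)" unfolding PD[symmetric]
    by (rule det_mult[of _ r]) (auto simp: Pmat_def Dmat_def)
  then show ?thesis using det_P det_D by simp
qed

lemma det_semilin:
  assumes b: "Fq_basis q r (b :: nat \<Rightarrow> 'k)"
  shows "det (mat r r (\<lambda>(i,l). Fq_coords q r b (\<beta> * b l ^ (q ^ j)) i)) = \<beta> ^ N"
proof -
  define G where "G = mat r r (\<lambda>(i,l). Fq_coords q r b (\<beta> * b l ^ (q ^ j)) i)"
  have GC: "G \<in> carrier_mat r r" unfolding G_def by simp
  have BC: "Bmat b \<in> carrier_mat r r" unfolding Bmat_def by simp
  have QC: "Qmat j \<beta> \<in> carrier_mat r r" unfolding Qmat_def by simp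
  have eq: "transpose_mat G * Bmat b = Bmat b * Qmat j \<beta>"
  proof (rule eq_matI)
    fix l k assume l: "l < dim_row (Bmat b * Qmat j \<beta>)" and k: "k < dim_col (Bmat b * Qmat j \<beta>)"
    then have lk: "l < r" "k < r" by (auto simp: Bmat_def Qmat_def)
    define c where "c = Fq_coords q r b (\<beta> * b l ^ (q ^ j))"
    have c: "\<forall>i<r. c i \<in> Fq q" "\<beta> * b l ^ (q ^ j) = (\<Sum>i<r. c i * b i)"
      using coords[OF b, of "\<beta> * b l ^ (q ^ j)"] unfolding c_def by auto
    have "(transpose_mat G * Bmat b) $$ (l, k) = (\<Sum>i\<in>{0..<r}. c i * b i ^ (q ^ k))"
      using lk unfolding G_def Bmat_def c_def by (simp add: scalar_prod_def)
    also have "\<dots> = (\<Sum>i<r. (c i * b i) ^ (q ^ k))"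
      unfolding atLeast0LessThan using c(1) Fq_pow by (intro sum.cong) (auto simp: power_mult_distrib)
    also have "\<dots> = (\<beta> * b l ^ (q ^ j)) ^ (q ^ k)" unfolding c(2) by (simp add: frob_sum)
    also have "\<dots> = \<beta> ^ (q ^ k) * b l ^ (q ^ (k + j))"
      by (simp add: power_mult_distrib power_mult[symmetric] power_add mult.commute)
    also have "\<dots> = b l ^ (q ^ ((k + j) mod r)) * \<beta> ^ (q ^ k)"
      using pow_q_mod[of "b l" "k + j"] by simp
    also have "\<dots> = (\<Sum>m\<in>{0..<r}. b l ^ (q ^ m) * (if m = (k + j) mod r then \<beta> ^ (q ^ k) else 0))"
    proof -
      have "(\<Sum>m\<in>{0..<r}. b l ^ (q ^ m) * (if m = (k + j) mod r then \<beta> ^ (q ^ k) else 0))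
          = (\<Sum>m\<in>{0..<r}. if m = (k + j) mod r then b l ^ (q ^ m) * \<beta> ^ (q ^ k) else 0)"
        by (intro sum.cong) auto
      also have "\<dots> = b l ^ (q ^ ((k + j) mod r)) * \<beta> ^ (q ^ k)" using r3 by (simp add: sum.delta')
      finally show ?thesis by simp
    qed
    also have "\<dots> = (Bmat b * Qmat j \<beta>) $$ (l, k)"
      using lk unfolding Bmat_def Qmat_def by (simp add: scalar_prod_def)
    finally show "(transpose_mat G * Bmat b) $$ (l, k) = (Bmat b * Qmat j \<beta>) $$ (l, k)" .
  qed (auto simp: G_def Bmat_def Qmat_def)
  have "det (transpose_mat G * Bmat b) = det G * det (Bmat b)"
    using det_mult[of "transpose_mat G" r "Bmat b"] det_transpose[OF GC] GC BC by simp
  moreover have "det (Bmat b * Qmat j \<beta>) = det (Bmat b) * \<beta> ^ N"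
    using det_mult[OF BC QC] det_Q by simp
  ultimately have "det G * det (Bmat b) = \<beta> ^ N * det (Bmat b)" using eq by (simp only: mult.commute)
  then have "det G = \<beta> ^ N" using moore[OF b] mult_right_cancel by blast
  then show ?thesis unfolding G_def .
qed

lemma Fq_det_semilin: "Fq_det q r (\<lambda>z::'k. \<beta> * z ^ (q ^ j)) = \<beta> ^ N"
proof -
  define b where "b = (SOME b. Fq_basis q r (b :: nat \<Rightarrow> 'k))"
  have b: "Fq_basis q r b" unfolding b_def using basis_exists by (rule someI_ex)
  show ?thesis unfolding Fq_det_def Let_def b_def[symmetric] using det_semilin[OF b] by simp
qed

definition "sl i j = (\<lambda>z::'k. \<alpha> ^ i * z ^ (q ^ j))"

lemma powq_inv: "((x::'k) ^ (q ^ j)) ^ (q ^ (r - j mod r)) = x"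
proof -
  have sh: "j + (r - j mod r) = 0 + (j div r + 1) * r"
  proof -
    have "j div r * r + j mod r = j" by (rule div_mult_mod_eq)
    moreover have "j mod r < r" using r3 by simp
    moreover have "(j div r + 1) * r = j div r * r + r" by simp
    ultimately show ?thesis by linarith
  qed
  have "(x ^ (q ^ j)) ^ (q ^ (r - j mod r)) = x ^ (q ^ (j + (r - j mod r)))"
    by (simp add: power_mult[symmetric] power_add)
  also have "\<dots> = x ^ (q ^ ((j + (r - j mod r)) mod r))" by (rule pow_q_mod)
  also have "(j + (r - j mod r)) mod r = 0" unfolding sh by (simp only: mod_mult_self1) simp
  finally show ?thesis by simp
qed

lemma sl_inj: "inj (sl i j)"
proof (rule injI)
  fix x y assume "sl i j x = sl i j y"
  then have "x ^ (q ^ j) = y ^ (q ^ j)" unfolding sl_def using alpha_nz by simp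
  then have "(x ^ (q ^ j)) ^ (q ^ (r - j mod r)) = (y ^ (q ^ j)) ^ (q ^ (r - j mod r))" by simp
  then show "x = y" unfolding powq_inv .
qed

lemma sl_Bij: "sl i j \<in> Bij (UNIV :: 'k set)"
proof -
  have "bij (sl i j)" using sl_inj finite_UNIV_inj_surj[of "sl i j"] by (simp add: bij_def)
  then show ?thesis unfolding Bij_def by simp
qed

lemma BG_mult: "f \<in> Bij UNIV \<Longrightarrow> g \<in> Bij UNIV \<Longrightarrow> f \<otimes>\<^bsub>BijGroup (UNIV::'k set)\<^esub> g = (\<lambda>x. f (g x))"
  unfolding BijGroup_def compose_def by (simp add: restrict_UNIV)

lemma BG_one: "\<one>\<^bsub>BijGroup (UNIV::'k set)\<^esub> = (\<lambda>x. x)"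
  unfolding BijGroup_def by (simp add: restrict_UNIV)

lemma sl_comp: "(\<lambda>x. sl a j1 (sl i j2 x)) = sl (a + i * q ^ j1) (j2 + j1)"
  unfolding sl_def
  by (simp add: fun_eq_iff power_mult_distrib power_mult[symmetric] power_add mult.commute mult.left_commute)

lemma BG_inv: "f \<in> Bij UNIV \<Longrightarrow> (\<lambda>x. g (f x)) = (\<lambda>x. x) \<Longrightarrow> (\<lambda>x. f (g x)) = (\<lambda>x. x) \<Longrightarrow>
   inv\<^bsub>BijGroup (UNIV::'k set)\<^esub> f = g"
proof -
  assume f: "f \<in> Bij UNIV" and gf: "(\<lambda>x. g (f x)) = (\<lambda>x. x)" and fg: "(\<lambda>x. f (g x)) = (\<lambda>x. x)"
  have "inv\<^bsub>BijGroup (UNIV::'k set)\<^esub> f = inv_into UNIV f" using inv_BijGroup[OF f] by (simp add: restrict_UNIV)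
  also have "inv_into UNIV f = g" by (rule inv_unique_comp) (use gf fg in \<open>auto simp: fun_eq_iff\<close>)
  finally show ?thesis .
qed

lemma GammaL_form: "g \<in> GammaL q \<alpha> \<Longrightarrow> \<exists>i j. g = sl i j"
  unfolding GammaL_def
proof (induction rule: generate.induct)
  case one
  show ?case by (intro exI[of _ 0]) (simp add: BG_one sl_def)
next
  case (incl h)
  have "h = sl 1 0 \<or> h = sl 0 1" using incl unfolding sl_def by auto
  then show ?case by blast
next
  case (inv h)
  then consider "h = sl 1 0" | "h = sl 0 1" unfolding sl_def by (auto simp: fun_eq_iff)
  then show ?case
  proof cases
    case 1
    have "inv\<^bsub>BijGroup (UNIV::'k set)\<^esub> h = sl (M - 1) 0"
    proof (rule BG_inv)
      show "h \<in> Bij UNIV" using 1 sl_Bij by simp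
      have "\<alpha> ^ (M - 1) * \<alpha> = \<alpha> ^ Suc (M - 1)" by (simp only: power_Suc2)
      also have "Suc (M - 1) = M" using M_pos by simp
      finally have "\<alpha> ^ (M - 1) * \<alpha> = 1" using alpha_M by simp
      then show "(\<lambda>x. sl (M - 1) 0 (h x)) = (\<lambda>x. x)" "(\<lambda>x. h (sl (M - 1) 0 x)) = (\<lambda>x. x)"
        unfolding 1 sl_def by (auto simp: fun_eq_iff mult.assoc[symmetric] mult.commute[of \<alpha>])
    qed
    then show ?thesis by blast
  next
    case 2
    have "inv\<^bsub>BijGroup (UNIV::'k set)\<^esub> h = sl 0 (r - 1)"
    proof (rule BG_inv)
      show "h \<in> Bij UNIV" using 2 sl_Bij by simp
      have e1: "(x ^ q) ^ (q ^ (r - 1)) = x" for x :: 'k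
        using powq_inv[of x 1] r3 by simp
      have e2: "(x ^ (q ^ (r - 1))) ^ q = x" for x :: 'k
        using e1[of x] by (simp add: power_mult[symmetric] mult.commute)
      show "(\<lambda>x. sl 0 (r - 1) (h x)) = (\<lambda>x. x)" "(\<lambda>x. h (sl 0 (r - 1) x)) = (\<lambda>x. x)"
        unfolding 2 sl_def using e1 e2 by auto
    qed
    then show ?thesis by blast
  qed
next
  case (eng h1 h2)
  then obtain a j1 i j2 where h: "h1 = sl a j1" "h2 = sl i j2" by blast
  have "h1 \<otimes>\<^bsub>BijGroup UNIV\<^esub> h2 = (\<lambda>x. h1 (h2 x))" using BG_mult h sl_Bij by simp
  also have "\<dots> = sl (a + i * q ^ j1) (j2 + j1)" unfolding h sl_comp ..
  finally show ?case by blast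
qed

lemma mult_in_GammaL: "(\<lambda>z::'k. \<alpha> ^ n * z) \<in> GammaL q \<alpha>"
proof (induction n)
  case 0
  have "\<one>\<^bsub>BijGroup (UNIV::'k set)\<^esub> \<in> GammaL q \<alpha>" unfolding GammaL_def by (rule generate.one)
  then show ?case by (simp add: BG_one)
next
  case (Suc n)
  have t: "(\<lambda>z::'k. \<alpha> * z) \<in> GammaL q \<alpha>" unfolding GammaL_def by (rule generate.incl) simp
  have "(\<lambda>z::'k. \<alpha> * z) \<otimes>\<^bsub>BijGroup (UNIV::'k set)\<^esub> (\<lambda>z::'k. \<alpha> ^ n * z) \<in> GammaL q \<alpha>"
    using t Suc unfolding GammaL_def by (rule generate.eng)
  moreover have "(\<lambda>z::'k. \<alpha> * z) \<otimes>\<^bsub>BijGroup (UNIV::'k set)\<^esub> (\<lambda>z::'k. \<alpha> ^ n * z) = (\<lambda>x. \<alpha> * (\<alpha> ^ n * x))"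
  proof (rule BG_mult)
    show "(\<lambda>z::'k. \<alpha> * z) \<in> Bij UNIV" using sl_Bij[of 1 0] unfolding sl_def by simp
    show "(\<lambda>z::'k. \<alpha> ^ n * z) \<in> Bij UNIV" using sl_Bij[of n 0] unfolding sl_def by simp
  qed
  moreover have "(\<lambda>x. \<alpha> * (\<alpha> ^ n * x)) = (\<lambda>z::'k. \<alpha> ^ Suc n * z)" by (simp add: mult.assoc)
  ultimately show ?case by simp
qed

lemma q2_dir: "q = 2 \<Longrightarrow> transitive_on_nonzero (GammaL1 q r \<alpha>)"
  unfolding transitive_on_nonzero_def
proof (intro allI impI)
  fix x y :: 'k assume q: "q = 2" and x: "x \<noteq> 0" and y: "y \<noteq> 0"
  have "y / x \<noteq> 0" using x y by simp
  then obtain n where n: "y / x = \<alpha> ^ n" using gen by blast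
  let ?g = "\<lambda>z::'k. \<alpha> ^ n * z"
  have "?g \<in> GL_Fq q"
  proof -
    have "?g = sl n 0" unfolding sl_def by auto
    then have "bij ?g" using sl_Bij unfolding Bij_def by simp
    moreover have "Fq_linear q ?g" unfolding Fq_linear_def by (simp add: algebra_simps)
    ultimately show ?thesis unfolding GL_Fq_def by simp
  qed
  moreover have "Fq_det q r ?g = 1"
  proof -
    have "?g = (\<lambda>z. \<alpha> ^ n * z ^ (q ^ 0))" by simp
    then have "Fq_det q r ?g = (\<alpha> ^ n) ^ N" using Fq_det_semilin[of "\<alpha> ^ n" 0] by metis
    also have "\<dots> = \<alpha> ^ (N * n)" by (simp add: power_mult[symmetric] mult.commute)
    also have "\<dots> = 1" using NM q alpha_one_iff by simp
    finally show ?thesis .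
  qed
  ultimately have "?g \<in> GammaL1 q r \<alpha>" unfolding GammaL1_def SL_Fq_def using mult_in_GammaL by simp
  moreover have "?g x = y" using n x by (simp flip: n)
  ultimately show "\<exists>g\<in>GammaL1 q r \<alpha>. g x = y" by blast
qed

lemma other_dir: "transitive_on_nonzero (GammaL1 q r \<alpha>) \<Longrightarrow> q = 2"
proof (rule ccontr)
  assume tr: "transitive_on_nonzero (GammaL1 q r \<alpha>)" and q: "q \<noteq> 2"
  have "\<exists>g\<in>GammaL1 q r \<alpha>. g 1 = \<alpha>"
    using tr alpha_nz unfolding transitive_on_nonzero_def by simp
  then obtain g where g: "g \<in> GammaL1 q r \<alpha>" "g 1 = \<alpha>" by blast
  obtain i j where ij: "g = sl i j" using g(1) GammaL_form unfolding GammaL1_def by blast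
  have ai: "\<alpha> ^ i = \<alpha>" using g(2) unfolding ij sl_def by simp
  have "Fq_det q r g = 1" using g(1) unfolding GammaL1_def SL_Fq_def by simp
  moreover have "Fq_det q r g = (\<alpha> ^ i) ^ N" unfolding ij sl_def by (rule Fq_det_semilin)
  ultimately have "(\<alpha> ^ i) ^ N = 1" by simp
  then have "\<alpha> ^ N = 1" using ai by simp
  then have d: "M dvd N" using alpha_one_iff by blast
  have "q \<ge> 3" using q q2 by simp
  have Np: "N > 0" using NM M_pos by (cases N) auto
  have "N * 1 < N * (q - 1)" using Np \<open>q \<ge> 3\<close> by simp
  then have "N < M" unfolding NM[symmetric] by simp
  then show False using d Np by (simp add: nat_dvd_not_less)
qed

end

theorem lemma3p3:
  fixes r m q :: nat and \<alpha> :: "'k::{field,finite}"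
  assumes "prime r" and "odd r" and "m \<ge> 1" and "q = 2 ^ m"
    and "card (UNIV :: 'k set) = q ^ r"
    and "\<forall>x::'k. x \<noteq> 0 \<longrightarrow> (\<exists>n::nat. x = \<alpha> ^ n)"
  shows "transitive_on_nonzero (GammaL1 q r \<alpha>) \<longleftrightarrow> q = 2"
proof -
  interpret setting r m q \<alpha> using assms by unfold_locales
  show ?thesis using q2_dir other_dir by blast
qed

end
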